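(* Let $f:\{0,1\}^n\to\{0,1\}$ be a read-once DNF formula with $m$ terms, each containing exactly $n/m$ variables (so every variable occurs in exactly one term). Under unit costs ($c_i=1$ for all $i$) and an arbitrary probability vector $p\in(0,1)^n$, there is a non-adaptive strategy $S$ with $$\mathrm{cost}_{c,p}(f,S)\le m\cdot \mathsf{OPT}_{\mathcal A}(f,c,p).$$
   Context: Stochastic Boolean Function Evaluation (SBFE) setup: $f:\{0,1\}^n\to\{0,1\}$ is a known Boolean function, $c\in\mathbb{R}_{>0}^n$ a cost vector and $p\in(0,1)^n$ a probability vector. The unknown input $x\in\{0,1\}^n$ is random with independent coordinates and $\Pr(x_i=1)=p_i$. The value $x_i$ can only be learned by testing variable $i$, at cost $c_i$. A strategy tests variables sequentially until $f(x)$ is determined, i.e. until $f(x')=f(x)$ for every $x'$ agreeing with $x$ on all tested coordinates. An adaptive strategy is a decision tree (the next test may depend on previous outcomes); a non-adaptive strategy is a fixed permutation of $[n]$, with variables tested in that order until $f(x)$ is determined. $\mathrm{cost}_{c,p}(f,S)$ is the expected total cost of tests performed by $S$ for random $x$. $\mathsf{OPT}_{\mathcal A}(f,c,p)$ (resp. $\mathsf{OPT}_{\mathcal N}(f,c,p)$) is the minimum of $\mathrm{cost}_{c,p}(f,S)$ over all adaptive (resp. non-adaptive) strategies. A DNF formula is a disjunction of terms, each a conjunction of literals; it is read-once if no variable is negated and distinct terms contain disjoint sets of variables. *)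

theory Defs
  imports Complex_Main
begin

text \<open>Inputs in {0,1}^n are modelled as functions nat => bool that are False outside {0..<n}.\<close>
definition Inputs :: "nat \<Rightarrow> (nat \<Rightarrow> bool) set" where
  "Inputs n = {x. \<forall>i\<ge>n. x i = False}"

definition prob_in :: "nat \<Rightarrow> (nat \<Rightarrow> real) \<Rightarrow> (nat \<Rightarrow> bool) \<Rightarrow> real" where
  "prob_in n p x = (\<Prod>i<n. if x i then p i else 1 - p i)"

definition determined :: "((nat \<Rightarrow> bool) \<Rightarrow> bool) \<Rightarrow> nat \<Rightarrow> nat set \<Rightarrow> (nat \<Rightarrow> bool) \<Rightarrow> bool" where
  "determined f n S x = (\<forall>x'\<in>Inputs n. (\<forall>i\<in>S. x' i = x i) \<longrightarrow> f x' = f x)"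

text \<open>Adaptive strategies: decision trees. Node i l r tests variable i and continues
  with l if x_i = 0 and with r if x_i = 1.\<close>
datatype dtree = Leaf | Node nat dtree dtree

fun tested :: "dtree \<Rightarrow> (nat \<Rightarrow> bool) \<Rightarrow> nat set" where
  "tested Leaf x = {}"
| "tested (Node i l r) x = insert i (tested (if x i then r else l) x)"

fun tree_cost :: "(nat \<Rightarrow> real) \<Rightarrow> dtree \<Rightarrow> (nat \<Rightarrow> bool) \<Rightarrow> real" where
  "tree_cost c Leaf x = 0"
| "tree_cost c (Node i l r) x = c i + tree_cost c (if x i then r else l) x"

definition valid_tree :: "((nat \<Rightarrow> bool) \<Rightarrow> bool) \<Rightarrow> nat \<Rightarrow> dtree \<Rightarrow> bool" where
  "valid_tree f n t = (\<forall>x\<in>Inputs n. tested t x \<subseteq> {..<n} \<and> determined f n (tested t x) x)"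

definition cost_adaptive ::
  "((nat \<Rightarrow> bool) \<Rightarrow> bool) \<Rightarrow> nat \<Rightarrow> (nat \<Rightarrow> real) \<Rightarrow> (nat \<Rightarrow> real) \<Rightarrow> dtree \<Rightarrow> real" where
  "cost_adaptive f n c p t = (\<Sum>x\<in>Inputs n. prob_in n p x * tree_cost c t x)"

definition OPT_A :: "((nat \<Rightarrow> bool) \<Rightarrow> bool) \<Rightarrow> nat \<Rightarrow> (nat \<Rightarrow> real) \<Rightarrow> (nat \<Rightarrow> real) \<Rightarrow> real" where
  "OPT_A f n c p = Inf {cost_adaptive f n c p t | t. valid_tree f n t}"

text \<open>Non-adaptive strategies: permutations of [n] (as distinct lists), tested in order until
  f(x) is determined.\<close>
definition is_perm :: "nat \<Rightarrow> nat list \<Rightarrow> bool" where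
  "is_perm n \<sigma> = (distinct \<sigma> \<and> set \<sigma> = {..<n})"

definition stop_index :: "((nat \<Rightarrow> bool) \<Rightarrow> bool) \<Rightarrow> nat \<Rightarrow> nat list \<Rightarrow> (nat \<Rightarrow> bool) \<Rightarrow> nat" where
  "stop_index f n \<sigma> x = (LEAST k. determined f n (set (take k \<sigma>)) x)"

definition cost_nonadaptive ::
  "((nat \<Rightarrow> bool) \<Rightarrow> bool) \<Rightarrow> nat \<Rightarrow> (nat \<Rightarrow> real) \<Rightarrow> (nat \<Rightarrow> real) \<Rightarrow> nat list \<Rightarrow> real" where
  "cost_nonadaptive f n c p \<sigma> =
     (\<Sum>x\<in>Inputs n. prob_in n p x * sum_list (map c (take (stop_index f n \<sigma> x) \<sigma>)))"

text \<open>Read-once DNF with terms T 0, ..., T (m-1) (monotone, pairwise disjoint, covering [n]).\<close>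
definition read_once_dnf :: "nat \<Rightarrow> (nat \<Rightarrow> nat set) \<Rightarrow> (nat \<Rightarrow> bool) \<Rightarrow> bool" where
  "read_once_dnf m T x = (\<exists>j<m. \<forall>i\<in>T j. x i)"

end

theory Submission
  imports Defs
begin

definition EE :: "nat \<Rightarrow> (nat \<Rightarrow> real) \<Rightarrow> ((nat \<Rightarrow> bool) \<Rightarrow> real) \<Rightarrow> real" where
  "EE n p F = (\<Sum>x\<in>Inputs n. prob_in n p x * F x)"

lemma Inputs_Suc: "Inputs (Suc n) = (\<lambda>(x,b). x(n:=b)) ` (Inputs n \<times> UNIV)"
proof
  show "(\<lambda>(x,b). x(n:=b)) ` (Inputs n \<times> UNIV) \<subseteq> Inputs (Suc n)"
    by (auto simp: Inputs_def)
  show "Inputs (Suc n) \<subseteq> (\<lambda>(x,b). x(n:=b)) ` (Inputs n \<times> UNIV)"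
  proof
    fix y assume y: "y \<in> Inputs (Suc n)"
    have "y = (\<lambda>(x,b). x(n:=b)) (y(n:=False), y n)" by auto
    moreover have "(y(n:=False), y n) \<in> Inputs n \<times> UNIV" using y by (auto simp: Inputs_def)
    ultimately show "y \<in> (\<lambda>(x,b). x(n:=b)) ` (Inputs n \<times> UNIV)" by blast
  qed
qed

lemma inj_Inputs_Suc: "inj_on (\<lambda>(x,b). x(n:=b)) (Inputs n \<times> UNIV)"
proof (rule inj_onI, clarify)
  fix x b x' b' assume x: "x \<in> Inputs n" and x': "x' \<in> Inputs n" and e: "x(n := b) = x'(n := b')"
  have "b = b'" using fun_cong[OF e, of n] by simp
  moreover have "x = x'"
  proof
    fix i show "x i = x' i"
    proof (cases "i = n")
      case True thus ?thesis using x x' by (auto simp: Inputs_def)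
    next
      case False thus ?thesis using fun_cong[OF e, of i] by simp
    qed
  qed
  ultimately show "x = x' \<and> b = b'" by simp
qed

lemma prob_in_upd: "x \<in> Inputs n \<Longrightarrow>
  prob_in (Suc n) p (x(n:=b)) = prob_in n p x * (if b then p n else 1 - p n)"
  unfolding prob_in_def by (simp add: prod.lessThan_Suc)

lemma sum_prob: "(\<Sum>x\<in>Inputs n. prob_in n p x) = 1"
proof (induction n)
  case 0
  have "Inputs 0 = {\<lambda>_. False}" by (auto simp: Inputs_def)
  thus ?case by (simp add: prob_in_def)
next
  case (Suc n)
  have "(\<Sum>x\<in>Inputs (Suc n). prob_in (Suc n) p x)
      = (\<Sum>z\<in>Inputs n \<times> UNIV. prob_in (Suc n) p ((\<lambda>(x,b). x(n:=b)) z))"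
    unfolding Inputs_Suc by (subst sum.reindex[OF inj_Inputs_Suc]) (simp add: comp_def)
  also have "\<dots> = (\<Sum>x\<in>Inputs n. \<Sum>b\<in>UNIV. prob_in (Suc n) p (x(n:=b)))"
    by (simp add: sum.cartesian_product case_prod_unfold)
  also have "\<dots> = (\<Sum>x\<in>Inputs n. prob_in n p x)"
  proof (rule sum.cong[OF refl])
    fix x assume "x \<in> Inputs n"
    hence "(\<Sum>b\<in>UNIV. prob_in (Suc n) p (x(n:=b))) = (\<Sum>b\<in>UNIV. prob_in n p x * (if b then p n else 1 - p n))"
      by (simp add: prob_in_upd)
    also have "\<dots> = prob_in n p x" by (simp add: UNIV_bool algebra_simps)
    finally show "(\<Sum>b\<in>UNIV. prob_in (Suc n) p (x(n:=b))) = prob_in n p x" .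
  qed
  finally show ?case using Suc by simp
qed

lemma prob_nonneg: "\<forall>l<n. 0 \<le> p l \<and> p l \<le> 1 \<Longrightarrow> 0 \<le> prob_in n p x"
  unfolding prob_in_def by (auto intro!: prod_nonneg)

lemma prob_in_rest: assumes "i < n"
  shows "prob_in n q x = (if x i then q i else 1 - q i) * (\<Prod>l\<in>{..<n}-{i}. if x l then q l else 1 - q l)"
  unfolding prob_in_def using assms by (subst prod.remove[of _ i]) auto

lemma EE_split: assumes "i < n"
  shows "EE n p (\<lambda>x. if x i then F x else G x) = p i * EE n (p(i:=1)) F + (1 - p i) * EE n (p(i:=0)) G"
proof -
  let ?R = "\<lambda>q x. (\<Prod>l\<in>{..<n}-{i}. if x l then q l else 1 - q l)"
  have R: "\<And>c x. ?R (p(i:=c)) x = ?R p x" by (rule prod.cong) auto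
  have pt: "prob_in n p x * (if x i then F x else G x) =
     p i * (prob_in n (p(i:=1)) x * F x) + (1 - p i) * (prob_in n (p(i:=0)) x * G x)" for x
    by (simp add: prob_in_rest[OF assms] R)
  show ?thesis unfolding EE_def by (simp add: pt sum.distrib sum_distrib_left)
qed

lemma EE_const: "EE n p (\<lambda>x. c) = c"
  unfolding EE_def using sum_prob[of n p] by (simp add: sum_distrib_right[symmetric])

lemma EE_cmult: "EE n p (\<lambda>x. c * F x) = c * EE n p F"
  unfolding EE_def by (simp add: sum_distrib_left algebra_simps)

lemma EE_diff: "EE n p (\<lambda>x. F x - G x) = EE n p F - EE n p G"
  unfolding EE_def by (simp add: sum_subtractf algebra_simps)

lemma EE_sum: "EE n p (\<lambda>x. \<Sum>r\<in>K. F r x) = (\<Sum>r\<in>K. EE n p (F r))"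
  unfolding EE_def by (simp add: sum_distrib_left sum.swap[of _ K])

lemma EE_mono: "\<forall>l<n. 0 \<le> p l \<and> p l \<le> 1 \<Longrightarrow> (\<And>x. x \<in> Inputs n \<Longrightarrow> F x \<le> G x) \<Longrightarrow> EE n p F \<le> EE n p G"
  unfolding EE_def by (intro sum_mono mult_left_mono) (auto intro: prob_nonneg)

lemma EE_cong: "(\<And>x. x \<in> Inputs n \<Longrightarrow> F x = G x) \<Longrightarrow> EE n p F = EE n p G"
  unfolding EE_def by (auto intro!: sum.cong)


definition pi :: "(nat \<Rightarrow> real) \<Rightarrow> nat set \<Rightarrow> nat \<Rightarrow> real" where
  "pi p B b = Min ((\<lambda>S. \<Prod>l\<in>S. p l) ` {S. S \<subseteq> B \<and> card S = b})"

lemma pi_fin: "finite B \<Longrightarrow> finite {S. S \<subseteq> B \<and> card S = b}"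
  by (rule finite_subset[of _ "Pow B"]) auto

lemma pi_mem: assumes "finite B" "b \<le> card B"
  shows "\<exists>S. S \<subseteq> B \<and> card S = b \<and> pi p B b = (\<Prod>l\<in>S. p l)"
proof -
  obtain S0 where "S0 \<subseteq> B" "card S0 = b" using obtain_subset_with_card_n[OF assms(2)] by blast
  hence ne: "{S. S \<subseteq> B \<and> card S = b} \<noteq> {}" by blast
  have "pi p B b \<in> (\<lambda>S. \<Prod>l\<in>S. p l) ` {S. S \<subseteq> B \<and> card S = b}"
    unfolding pi_def using pi_fin[OF assms(1)] ne by (intro Min_in) auto
  thus ?thesis by auto
qed

lemma pi_le: "finite B \<Longrightarrow> S \<subseteq> B \<Longrightarrow> card S = b \<Longrightarrow> pi p B b \<le> (\<Prod>l\<in>S. p l)"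
  unfolding pi_def using pi_fin by (intro Min_le) auto

lemma pi_0: "finite B \<Longrightarrow> pi p B 0 = 1"
proof -
  assume f: "finite B"
  have "{S. S \<subseteq> B \<and> card S = 0} = {{}}" using f by (auto simp: card_eq_0_iff dest: finite_subset)
  thus ?thesis unfolding pi_def by simp
qed

lemma pi_cong: "finite B \<Longrightarrow> (\<And>l. l \<in> B \<Longrightarrow> p l = q l) \<Longrightarrow> pi p B b = pi q B b"
  unfolding pi_def by (intro arg_cong[where f=Min] image_cong refl prod.cong) auto

lemma pi_bounds: assumes "finite B" "b \<le> card B" "\<forall>c\<in>B. 0 \<le> p c \<and> p c \<le> 1"
  shows "0 \<le> pi p B b \<and> pi p B b \<le> 1"
proof -
  obtain S where S: "S \<subseteq> B" "card S = b" "pi p B b = (\<Prod>l\<in>S. p l)" using pi_mem[OF assms(1,2)] by blast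
  have "0 \<le> (\<Prod>l\<in>S. p l)" using S assms by (intro prod_nonneg) auto
  moreover have "(\<Prod>l\<in>S. p l) \<le> 1" using S assms by (intro prod_le_1) auto
  ultimately show ?thesis using S by simp
qed

lemma pi_step_le: assumes "finite B" "i \<in> B" "0 < b" "b \<le> card B"
  shows "pi p B b \<le> p i * pi p (B - {i}) (b - 1)"
proof -
  have "b - 1 \<le> card (B - {i})" using assms by simp
  then obtain S where S: "S \<subseteq> B - {i}" "card S = b - 1" "pi p (B - {i}) (b - 1) = (\<Prod>l\<in>S. p l)"
    using pi_mem[of "B - {i}" "b - 1" p] assms by auto
  have fS: "finite S" using S assms finite_subset by blast
  have iS: "i \<notin> S" using S by auto
  have "insert i S \<subseteq> B" "card (insert i S) = b" using S assms fS iS by auto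
  hence "pi p B b \<le> (\<Prod>l\<in>insert i S. p l)" using pi_le assms by blast
  also have "\<dots> = p i * (\<Prod>l\<in>S. p l)" using fS S by (subst prod.insert) auto
  finally show ?thesis using S by simp
qed

lemma pi_step_ge: assumes "finite B" "i \<in> B" "0 < b" "b \<le> card B"
  and mn: "\<forall>c\<in>B. p i \<le> p c" and nn: "\<forall>c\<in>B. 0 \<le> p c"
  shows "p i * pi p (B - {i}) (b - 1) \<le> pi p B b"
proof -
  obtain S where S: "S \<subseteq> B" "card S = b" "pi p B b = (\<Prod>l\<in>S. p l)" using pi_mem[OF assms(1,4)] by blast
  have fS: "finite S" using S assms finite_subset by blast
  have pinn: "0 \<le> p i" using nn assms by auto
  show ?thesis
  proof (cases "i \<in> S")
    case True
    have "S - {i} \<subseteq> B - {i}" "card (S - {i}) = b - 1" using S True fS by auto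
    hence "pi p (B - {i}) (b - 1) \<le> (\<Prod>l\<in>S - {i}. p l)" using pi_le assms by blast
    hence "p i * pi p (B - {i}) (b - 1) \<le> p i * (\<Prod>l\<in>S - {i}. p l)" using pinn by (rule mult_left_mono)
    also have "\<dots> = (\<Prod>l\<in>S. p l)" using True fS by (simp add: prod.remove)
    finally show ?thesis using S by simp
  next
    case False
    have "S \<noteq> {}" using S assms by auto
    then obtain s where s: "s \<in> S" by blast
    have "S - {s} \<subseteq> B - {i}" "card (S - {s}) = b - 1" using S False fS s by auto
    hence "pi p (B - {i}) (b - 1) \<le> (\<Prod>l\<in>S - {s}. p l)" using pi_le assms by blast
    hence "p i * pi p (B - {i}) (b - 1) \<le> p i * (\<Prod>l\<in>S - {s}. p l)" using pinn by (rule mult_left_mono)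
    also have "\<dots> \<le> p s * (\<Prod>l\<in>S - {s}. p l)"
      using mn s S nn by (intro mult_right_mono prod_nonneg) auto
    also have "\<dots> = (\<Prod>l\<in>S. p l)" using s fS by (simp add: prod.remove)
    finally show ?thesis using S by simp
  qed
qed

definition phi :: "nat \<Rightarrow> (nat \<Rightarrow> real) \<Rightarrow> nat set \<Rightarrow> nat \<Rightarrow> real" where
  "phi r p B d = (if r < d then 0 else if d + card B \<le> r then 1 else 1 - pi p B (r - d))"

lemma phi_bounds: assumes "finite B" "\<forall>c\<in>B. 0 \<le> p c \<and> p c \<le> 1"
  shows "0 \<le> phi r p B d \<and> phi r p B d \<le> 1"
  using pi_bounds[OF assms(1) _ assms(2), of "r - d"] unfolding phi_def by auto

lemma phi_cong: "finite B \<Longrightarrow> (\<And>l. l \<in> B \<Longrightarrow> p l = q l) \<Longrightarrow> phi r p B d = phi r q B d"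
  by (simp add: phi_def pi_cong[of B p q])

lemma phi_empty: "phi r p {} 0 = 1"
  unfolding phi_def by simp

lemma KI: assumes "finite B" "i \<in> B" "\<forall>c\<in>B. 0 \<le> p c \<and> p c \<le> 1"
  shows "p i * phi r p (B - {i}) (Suc d) + (1 - p i) * of_bool (Suc d \<le> r) \<le> phi r p B d"
proof -
  have pi01: "0 \<le> p i" "p i \<le> 1" using assms by auto
  have cB: "card (B - {i}) = card B - 1" "card B \<ge> 1" using assms by (auto simp: card_gt_0_iff Suc_le_eq)
  consider "r < d" | "d \<le> r" "d + card B \<le> r" | "d = r" "d + card B > r" | "d < r" "d + card B > r"
    by linarith
  thus ?thesis
  proof cases
    case 1 thus ?thesis by (simp add: phi_def)
  next
    case 2
    hence "phi r p (B - {i}) (Suc d) = 1" "Suc d \<le> r" using cB by (auto simp: phi_def)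
    thus ?thesis using 2 by (simp add: phi_def)
  next
    case 3 thus ?thesis using pi_0[OF assms(1)] by (simp add: phi_def)
  next
    case 4
    have ph1: "phi r p (B - {i}) (Suc d) = 1 - pi p (B - {i}) (r - d - 1)"
      using 4 cB by (auto simp: phi_def)
    have ph: "phi r p B d = 1 - pi p B (r - d)" using 4 by (simp add: phi_def)
    have "pi p B (r - d) \<le> p i * pi p (B - {i}) (r - d - 1)"
      using pi_step_le[OF assms(1,2), of "r - d" p] 4 by auto
    moreover have "of_bool (Suc d \<le> r) = (1::real)" using 4 by simp
    ultimately show ?thesis unfolding ph ph1 by (simp add: algebra_simps)
  qed
qed

lemma KE: assumes "finite B" "i \<in> B" "\<forall>c\<in>B. 0 \<le> p c \<and> p c \<le> 1" "\<forall>c\<in>B. p i \<le> p c"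
  shows "p i * phi r p (B - {i}) (Suc d) + (1 - p i) * of_bool (Suc d \<le> r) = phi r p B d"
proof -
  have pi01: "0 \<le> p i" "p i \<le> 1" using assms by auto
  have cB: "card (B - {i}) = card B - 1" "card B \<ge> 1" using assms by (auto simp: card_gt_0_iff Suc_le_eq)
  consider "r < d" | "d \<le> r" "d + card B \<le> r" | "d = r" "d + card B > r" | "d < r" "d + card B > r"
    by linarith
  thus ?thesis
  proof cases
    case 1 thus ?thesis by (simp add: phi_def)
  next
    case 2
    hence "phi r p (B - {i}) (Suc d) = 1" "Suc d \<le> r" using cB by (auto simp: phi_def)
    thus ?thesis using 2 by (simp add: phi_def)
  next
    case 3 thus ?thesis using pi_0[OF assms(1)] by (simp add: phi_def)
  next
    case 4
    have ph1: "phi r p (B - {i}) (Suc d) = 1 - pi p (B - {i}) (r - d - 1)"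
      using 4 cB by (auto simp: phi_def)
    have ph: "phi r p B d = 1 - pi p B (r - d)" using 4 by (simp add: phi_def)
    have "pi p B (r - d) \<le> p i * pi p (B - {i}) (r - d - 1)"
      using pi_step_le[OF assms(1,2), of "r - d" p] 4 by auto
    moreover have "p i * pi p (B - {i}) (r - d - 1) \<le> pi p B (r - d)"
      using pi_step_ge[OF assms(1,2), of "r - d" p] 4 assms(3,4) by auto
    moreover have "of_bool (Suc d \<le> r) = (1::real)" using 4 by simp
    ultimately show ?thesis unfolding ph ph1 by (simp add: algebra_simps)
  qed
qed


fun H :: "nat set \<Rightarrow> dtree \<Rightarrow> (nat \<Rightarrow> bool) \<Rightarrow> nat" where
  "H A Leaf x = card A"
| "H A (Node i l r) x = (if i \<in> A then (if x i then Suc (H (A - {i}) r x) else 1)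
                         else H A (if x i then r else l) x)"

lemma H_empty: "H {} t x = 0"
  by (induction t) auto

definition succ :: "nat \<Rightarrow> nat \<Rightarrow> (nat \<Rightarrow> nat set) \<Rightarrow> (nat \<Rightarrow> nat) \<Rightarrow> dtree \<Rightarrow> (nat \<Rightarrow> bool) \<Rightarrow> bool" where
  "succ m r A d t x = (\<forall>j<m. d j + H (A j) t x \<le> r)"

definition V :: "nat \<Rightarrow> nat \<Rightarrow> (nat \<Rightarrow> real) \<Rightarrow> (nat \<Rightarrow> nat set) \<Rightarrow> (nat \<Rightarrow> nat) \<Rightarrow> real" where
  "V m r q A d = (\<Prod>j<m. phi r q (A j) (d j))"

lemma V_split: "j < m \<Longrightarrow> V m r q A d = phi r q (A j) (d j) * (\<Prod>j'\<in>{..<m}-{j}. phi r q (A j') (d j'))"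
  unfolding V_def by (subst prod.remove[of _ j]) auto

lemma rest_upd: "(\<Prod>j'\<in>{..<m}-{j}. phi r q ((A(j:=X)) j') ((d(j:=y)) j')) = (\<Prod>j'\<in>{..<m}-{j}. phi r q (A j') (d j'))"
  by (rule prod.cong) auto

lemma rest_p: assumes "\<forall>j'<m. j' \<noteq> j \<longrightarrow> i \<notin> A j' \<and> finite (A j')"
  shows "(\<Prod>j'\<in>{..<m}-{j}. phi r (p(i:=c)) (A j') (d j')) = (\<Prod>j'\<in>{..<m}-{j}. phi r p (A j') (d j'))"
  using assms by (intro prod.cong refl phi_cong) auto

lemma rest_nonneg: assumes "\<forall>j<m. finite (A j) \<and> (\<forall>c\<in>A j. 0 \<le> p c \<and> p c \<le> 1)"
  shows "0 \<le> (\<Prod>j'\<in>{..<m}-{j}. phi r p (A j') (d j'))"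
  using assms phi_bounds by (intro prod_nonneg) auto

lemma V_p: assumes "\<forall>j<m. i \<notin> A j \<and> finite (A j)"
  shows "V m r (p(i:=c)) A d = V m r p A d"
  unfolding V_def using assms by (intro prod.cong refl phi_cong) auto

lemma succ_node_out: "\<forall>j<m. i \<notin> A j \<Longrightarrow>
   succ m r A d (Node i l rt) x = succ m r A d (if x i then rt else l) x"
  unfolding succ_def by auto

lemma succ_node_in: assumes "j < m" "i \<in> A j" "\<forall>j'<m. j' \<noteq> j \<longrightarrow> i \<notin> A j'"
  shows "of_bool (succ m r A d (Node i l rt) x) =
    (if x i then of_bool (succ m r (A(j := A j - {i})) (d(j := Suc (d j))) rt x)
     else of_bool (Suc (d j) \<le> r) * (of_bool (succ m r (A(j := {})) (d(j := 0)) l x) :: real))"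
proof (cases "x i")
  case True
  have "\<And>j'. j' < m \<Longrightarrow> (d j' + H (A j') (Node i l rt) x \<le> r) =
     ((d(j := Suc (d j))) j' + H ((A(j := A j - {i})) j') rt x \<le> r)"
    using assms True by (case_tac "j' = j") auto
  hence "succ m r A d (Node i l rt) x = succ m r (A(j := A j - {i})) (d(j := Suc (d j))) rt x"
    unfolding succ_def by auto
  thus ?thesis using True by simp
next
  case False
  have e: "\<And>j'. j' < m \<Longrightarrow> j' \<noteq> j \<Longrightarrow> (d j' + H (A j') (Node i l rt) x \<le> r) =
     ((d(j := 0)) j' + H ((A(j := {})) j') l x \<le> r)"
    using assms False by auto
  have ej: "(d j + H (A j) (Node i l rt) x \<le> r) = (Suc (d j) \<le> r)"
    using assms False by auto
  have ej2: "(d(j := 0)) j + H ((A(j := {})) j) l x \<le> r" by (simp add: H_empty)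
  have "succ m r A d (Node i l rt) x = (Suc (d j) \<le> r \<and> succ m r (A(j := {})) (d(j := 0)) l x)"
    unfolding succ_def using e ej ej2 assms(1) by metis
  thus ?thesis using False by simp
qed

lemma pr_upd: "\<forall>l<n. 0 \<le> p l \<and> p l \<le> 1 \<Longrightarrow> (c::real) \<in> {0,1} \<Longrightarrow> \<forall>l<n. 0 \<le> (p(i:=c)) l \<and> (p(i:=c)) l \<le> 1"
  by auto

lemma succ_le:
  assumes pr: "\<forall>l<n. 0 \<le> p l \<and> p l \<le> 1"
  and fin: "\<forall>j<m. finite (A j) \<and> A j \<subseteq> {..<n}"
  and dj: "\<forall>j<m. \<forall>j'<m. j \<noteq> j' \<longrightarrow> A j \<inter> A j' = {}"
  shows "EE n p (\<lambda>x. of_bool (succ m r A d t x)) \<le> V m r p A d"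
  using assms
proof (induction t arbitrary: p A d)
  case Leaf
  have Vnn: "0 \<le> V m r p A d" unfolding V_def using Leaf phi_bounds
    by (intro prod_nonneg) (meson lessThan_iff subset_eq)
  show ?case
  proof (cases "\<forall>j<m. d j + card (A j) \<le> r")
    case True
    hence "V m r p A d = 1" unfolding V_def by (intro prod.neutral) (auto simp: phi_def)
    thus ?thesis using True by (simp add: succ_def EE_const)
  next
    case False
    hence "\<And>x. \<not> succ m r A d Leaf x" by (simp add: succ_def)
    thus ?thesis using Vnn by (simp add: EE_const)
  qed
next
  case (Node i l rt)
  have pB: "\<forall>j<m. finite (A j) \<and> (\<forall>c\<in>A j. 0 \<le> p c \<and> p c \<le> 1)" using Node.prems by blast
  show ?case
  proof (cases "\<exists>j<m. i \<in> A j")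
    case True
    then obtain j where j: "j < m" "i \<in> A j" by blast
    have oth: "\<forall>j'<m. j' \<noteq> j \<longrightarrow> i \<notin> A j'" using Node.prems(3) j by blast
    have "i < n" using Node.prems(2) j by auto
    hence pi01: "0 \<le> p i" "p i \<le> 1" using Node.prems(1) by auto
    define A1 where "A1 = A(j := A j - {i})"
    define d1 where "d1 = d(j := Suc (d j))"
    define A0 where "A0 = A(j := {})"
    define d0 where "d0 = d(j := 0)"
    define R where "R = (\<Prod>j'\<in>{..<m}-{j}. phi r p (A j') (d j'))"
    define c where "c = (of_bool (Suc (d j) \<le> r) :: real)"
    have R0: "0 \<le> R" unfolding R_def by (rule rest_nonneg[OF pB])
    have finA: "finite (A j)" using Node.prems(2) j by auto
    have sub1: "\<And>j'. A1 j' \<subseteq> A j'" "\<And>j'. A0 j' \<subseteq> A j'" unfolding A1_def A0_def by auto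
    have pr1: "\<forall>l<n. 0 \<le> (p(i:=c')) l \<and> (p(i:=c')) l \<le> 1" if "c' = 0 \<or> c' = 1" for c'
      using Node.prems(1) that by auto
    have fin1: "\<forall>j'<m. finite (A1 j') \<and> A1 j' \<subseteq> {..<n}" "\<forall>j'<m. finite (A0 j') \<and> A0 j' \<subseteq> {..<n}"
      using Node.prems(2) sub1 by (meson finite_subset subset_trans)+
    have dj1: "\<forall>j1<m. \<forall>j2<m. j1 \<noteq> j2 \<longrightarrow> A1 j1 \<inter> A1 j2 = {}"
              "\<forall>j1<m. \<forall>j2<m. j1 \<noteq> j2 \<longrightarrow> A0 j1 \<inter> A0 j2 = {}"
      using Node.prems(3) sub1 by blast+
    have IH1: "EE n (p(i:=1)) (\<lambda>x. of_bool (succ m r A1 d1 rt x)) \<le> V m r (p(i:=1)) A1 d1"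
      by (rule Node.IH(2)[OF pr1 fin1(1) dj1(1)]) simp
    have IH0: "EE n (p(i:=0)) (\<lambda>x. of_bool (succ m r A0 d0 l x)) \<le> V m r (p(i:=0)) A0 d0"
      by (rule Node.IH(1)[OF pr1 fin1(2) dj1(2)]) simp
    have restq: "(\<Prod>j'\<in>{..<m}-{j}. phi r (p(i:=c')) (A j') (d j')) = R" for c'
      unfolding R_def using oth Node.prems(2) by (intro rest_p) auto
    have V1: "V m r (p(i:=1)) A1 d1 = phi r p (A j - {i}) (Suc (d j)) * R"
    proof -
      have "V m r (p(i:=1)) A1 d1 = phi r (p(i:=1)) (A j - {i}) (Suc (d j)) * R"
        unfolding V_split[OF j(1), of r "p(i:=1)" A1 d1] unfolding A1_def d1_def rest_upd restq
        by simp
      also have "phi r (p(i:=1)) (A j - {i}) (Suc (d j)) = phi r p (A j - {i}) (Suc (d j))"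
        using finA by (intro phi_cong) auto
      finally show ?thesis .
    qed
    have V0: "V m r (p(i:=0)) A0 d0 = R"
      unfolding V_split[OF j(1), of r "p(i:=0)" A0 d0] unfolding A0_def d0_def rest_upd restq
      by (simp add: phi_empty)
    have "EE n p (\<lambda>x. of_bool (succ m r A d (Node i l rt) x))
       = EE n p (\<lambda>x. if x i then of_bool (succ m r A1 d1 rt x) else c * of_bool (succ m r A0 d0 l x))"
      unfolding A1_def d1_def A0_def d0_def c_def using succ_node_in[OF j oth] by simp
    also have "\<dots> = p i * EE n (p(i:=1)) (\<lambda>x. of_bool (succ m r A1 d1 rt x))
        + (1 - p i) * (c * EE n (p(i:=0)) (\<lambda>x. of_bool (succ m r A0 d0 l x)))"
      by (simp add: EE_split[OF \<open>i < n\<close>] EE_cmult)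
    also have "\<dots> \<le> p i * (phi r p (A j - {i}) (Suc (d j)) * R) + (1 - p i) * (c * R)"
    proof -
      have "EE n (p(i:=1)) (\<lambda>x. of_bool (succ m r A1 d1 rt x)) \<le> phi r p (A j - {i}) (Suc (d j)) * R"
        using IH1 V1 by simp
      hence a: "p i * EE n (p(i:=1)) (\<lambda>x. of_bool (succ m r A1 d1 rt x)) \<le> p i * (phi r p (A j - {i}) (Suc (d j)) * R)"
        using pi01(1) by (rule mult_left_mono)
      have "c * EE n (p(i:=0)) (\<lambda>x. of_bool (succ m r A0 d0 l x)) \<le> c * R"
        using IH0 V0 by (intro mult_left_mono) (auto simp: c_def)
      hence b: "(1 - p i) * (c * EE n (p(i:=0)) (\<lambda>x. of_bool (succ m r A0 d0 l x))) \<le> (1 - p i) * (c * R)"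
        by (rule mult_left_mono) (use pi01 in simp)
      show ?thesis using add_mono[OF a b] .
    qed
    also have "\<dots> = (p i * phi r p (A j - {i}) (Suc (d j)) + (1 - p i) * c) * R"
      by (simp add: algebra_simps)
    also have "\<dots> \<le> phi r p (A j) (d j) * R"
      using KI[OF finA j(2), of p r "d j"] pB j R0 unfolding c_def by (intro mult_right_mono) auto
    also have "\<dots> = V m r p A d" unfolding V_split[OF j(1)] R_def ..
    finally show ?thesis .
  next
    case False
    hence out: "\<forall>j<m. i \<notin> A j" by blast
    have fA: "\<forall>j<m. i \<notin> A j \<and> finite (A j)" using out Node.prems(2) by blast
    show ?thesis
    proof (cases "i < n")
      case True
      hence pi01: "0 \<le> p i" "p i \<le> 1" using Node.prems(1) by auto
      have "EE n p (\<lambda>x. of_bool (succ m r A d (Node i l rt) x))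
        = EE n p (\<lambda>x. if x i then of_bool (succ m r A d rt x) else of_bool (succ m r A d l x))"
        by (intro EE_cong) (auto simp: succ_node_out[OF out])
      also have "\<dots> = p i * EE n (p(i:=1)) (\<lambda>x. of_bool (succ m r A d rt x))
          + (1 - p i) * EE n (p(i:=0)) (\<lambda>x. of_bool (succ m r A d l x))"
        by (simp add: EE_split[OF True])
      also have "\<dots> \<le> p i * V m r (p(i:=1)) A d + (1 - p i) * V m r (p(i:=0)) A d"
      proof -
        have pr1: "\<forall>l<n. 0 \<le> (p(i:=c')) l \<and> (p(i:=c')) l \<le> 1" if "c' = 0 \<or> c' = 1" for c'
          using Node.prems(1) that by auto
        have "EE n (p(i:=1)) (\<lambda>x. of_bool (succ m r A d rt x)) \<le> V m r (p(i:=1)) A d"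
          by (rule Node.IH(2)[OF pr1 Node.prems(2,3)]) simp
        moreover have "EE n (p(i:=0)) (\<lambda>x. of_bool (succ m r A d l x)) \<le> V m r (p(i:=0)) A d"
          by (rule Node.IH(1)[OF pr1 Node.prems(2,3)]) simp
        ultimately show ?thesis using pi01 by (intro add_mono mult_left_mono) auto
      qed
      also have "\<dots> = V m r p A d" using V_p[OF fA] by (simp add: algebra_simps)
      finally show ?thesis .
    next
      case False
      have "EE n p (\<lambda>x. of_bool (succ m r A d (Node i l rt) x))
        = EE n p (\<lambda>x. of_bool (succ m r A d l x))"
        using succ_node_out[OF out] False by (intro EE_cong) (auto simp: Inputs_def)
      also have "\<dots> \<le> V m r p A d" by (rule Node.IH(1)[OF Node.prems])
      finally show ?thesis .
    qed
  qed
qed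


fun chain :: "nat list \<Rightarrow> dtree" where
  "chain [] = Leaf"
| "chain (a # L) = Node a (chain L) (chain L)"

lemma prod_of_bool: "(\<Prod>j<(m::nat). (of_bool (P j) :: real)) = of_bool (\<forall>j<m. P j)"
proof (cases "\<forall>j<m. P j")
  case True thus ?thesis by (simp add: prod.neutral)
next
  case False
  then obtain j where "j < m" "\<not> P j" by blast
  hence "(\<Prod>j<m. (of_bool (P j) :: real)) = 0" by (intro prod_zero) auto
  thus ?thesis using False by simp
qed

lemma srt_tail: "sorted_wrt (\<lambda>a b. p a \<le> p b) (filter P (a # L)) \<Longrightarrow> sorted_wrt (\<lambda>a b. p a \<le> p b) (filter P L)"
  by (cases "P a") auto

lemma srt_upd: "sorted_wrt (\<lambda>a b. p a \<le> p b) L \<Longrightarrow> i \<notin> set L \<Longrightarrow> sorted_wrt (\<lambda>a b. (p(i:=c)) a \<le> (p(i:=c)) b) L"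
  by (rule sorted_wrt_mono_rel[of L "\<lambda>a b. p a \<le> p b"]) auto

lemma succ_eq:
  assumes pr: "\<forall>l<n. 0 \<le> p l \<and> p l \<le> 1"
  and sub: "\<forall>j<m. A j \<subseteq> T j \<inter> set L"
  and Ln: "set L \<subseteq> {..<n}"
  and dist: "distinct L"
  and disjT: "\<forall>j<m. \<forall>j'<m. j \<noteq> j' \<longrightarrow> T j \<inter> T j' = {}"
  and srt: "\<forall>j<m. sorted_wrt (\<lambda>a b. p a \<le> p b) (filter (\<lambda>a. a \<in> T j) L)"
  shows "EE n p (\<lambda>x. of_bool (succ m r A d (chain L) x)) = V m r p A d"
  using assms
proof (induction L arbitrary: p A d)
  case Nil
  hence Ae: "\<forall>j<m. A j = {}" by auto
  have ph: "\<And>e. phi r p {} e = of_bool (e \<le> r)" by (simp add: phi_def)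
  have "V m r p A d = (\<Prod>j<m. of_bool (d j \<le> r))" unfolding V_def using Ae ph by (intro prod.cong) auto
  also have "\<dots> = of_bool (\<forall>j<m. d j \<le> r)" by (rule prod_of_bool)
  finally have "V m r p A d = of_bool (\<forall>j<m. d j \<le> r)" .
  moreover have "\<And>x. succ m r A d (chain []) x = (\<forall>j<m. d j \<le> r)" using Ae by (simp add: succ_def)
  ultimately show ?case by (simp add: EE_const)
next
  case (Cons a L)
  have an: "a < n" using Cons.prems(3) by auto
  hence pa01: "0 \<le> p a" "p a \<le> 1" using Cons.prems(1) by auto
  have aL: "a \<notin> set L" "distinct L" using Cons.prems(4) by auto
  have Ln': "set L \<subseteq> {..<n}" using Cons.prems(3) by auto
  have pr1: "\<forall>l<n. 0 \<le> (p(a:=c')) l \<and> (p(a:=c')) l \<le> 1" if "c' = 0 \<or> c' = 1" for c'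
    using Cons.prems(1) that by auto
  have st: "sorted_wrt (\<lambda>a b. p a \<le> p b) (filter (\<lambda>u. u \<in> T j) L)" if j: "j < m" for j
  proof -
    have "sorted_wrt (\<lambda>a b. p a \<le> p b) (filter (\<lambda>u. u \<in> T j) (a # L))" using Cons.prems(6) j by blast
    thus ?thesis by (rule srt_tail)
  qed
  have srt1: "\<forall>j<m. sorted_wrt (\<lambda>u v. (p(a:=c')) u \<le> (p(a:=c')) v) (filter (\<lambda>u. u \<in> T j) L)" for c'
  proof (intro allI impI)
    fix j assume j: "j < m"
    have "a \<notin> set (filter (\<lambda>u. u \<in> T j) L)" using aL by simp
    with st[OF j] show "sorted_wrt (\<lambda>u v. (p(a:=c')) u \<le> (p(a:=c')) v) (filter (\<lambda>u. u \<in> T j) L)"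
      by (rule srt_upd)
  qed
  have Asub: "A j \<subseteq> set (a # L)" if "j < m" for j using Cons.prems(2) that by blast
  have pB: "\<forall>j<m. finite (A j) \<and> (\<forall>c\<in>A j. 0 \<le> p c \<and> p c \<le> 1)"
  proof (intro allI impI conjI)
    fix j assume j: "j < m"
    show "finite (A j)" by (rule finite_subset[OF Asub[OF j]]) simp
    have "A j \<subseteq> {..<n}" using Asub[OF j] Cons.prems(3) by (rule order_trans)
    thus "\<forall>c\<in>A j. 0 \<le> p c \<and> p c \<le> 1" using Cons.prems(1) by blast
  qed
  have finA': "\<forall>j<m. finite (A j)" using pB by blast
  have Node: "chain (a # L) = Node a (chain L) (chain L)" by simp
  show ?case
  proof (cases "\<exists>j<m. a \<in> A j")
    case True
    then obtain j where j: "j < m" "a \<in> A j" by blast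
    have aT: "a \<in> T j" using Cons.prems(2) j by auto
    have othT: "\<forall>j'<m. j' \<noteq> j \<longrightarrow> a \<notin> T j'" using Cons.prems(5) j aT by blast
    have oth: "\<forall>j'<m. j' \<noteq> j \<longrightarrow> a \<notin> A j'" using othT Cons.prems(2) by blast
    define A1 where "A1 = A(j := A j - {a})"
    define d1 where "d1 = d(j := Suc (d j))"
    define A0 where "A0 = A(j := {})"
    define d0 where "d0 = d(j := 0)"
    define R where "R = (\<Prod>j'\<in>{..<m}-{j}. phi r p (A j') (d j'))"
    define c where "c = (of_bool (Suc (d j) \<le> r) :: real)"
    have finA: "finite (A j)" using pB j by auto
    have rem: "A j' - {a} \<subseteq> T j' \<inter> set L" if "j' < m" for j'
      using Cons.prems(2) that by auto
    have s1: "A1 j' \<subseteq> A j' - {a}" "A0 j' \<subseteq> A j' - {a}" if "j' < m" for j'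
      using oth that unfolding A1_def A0_def by auto
    have sub1: "\<forall>j'<m. A1 j' \<subseteq> T j' \<inter> set L" "\<forall>j'<m. A0 j' \<subseteq> T j' \<inter> set L"
      using s1 rem by blast+
    have IH1: "EE n (p(a:=1)) (\<lambda>x. of_bool (succ m r A1 d1 (chain L) x)) = V m r (p(a:=1)) A1 d1"
      by (rule Cons.IH[OF pr1 sub1(1) Ln' aL(2) Cons.prems(5) srt1]) simp
    have IH0: "EE n (p(a:=0)) (\<lambda>x. of_bool (succ m r A0 d0 (chain L) x)) = V m r (p(a:=0)) A0 d0"
      by (rule Cons.IH[OF pr1 sub1(2) Ln' aL(2) Cons.prems(5) srt1]) simp
    have restq: "(\<Prod>j'\<in>{..<m}-{j}. phi r (p(a:=c')) (A j') (d j')) = R" for c'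
      unfolding R_def using oth finA' by (intro rest_p) auto
    have V1: "V m r (p(a:=1)) A1 d1 = phi r p (A j - {a}) (Suc (d j)) * R"
    proof -
      have "V m r (p(a:=1)) A1 d1 = phi r (p(a:=1)) (A j - {a}) (Suc (d j)) * R"
        unfolding V_split[OF j(1), of r "p(a:=1)" A1 d1] unfolding A1_def d1_def rest_upd restq
        by simp
      also have "phi r (p(a:=1)) (A j - {a}) (Suc (d j)) = phi r p (A j - {a}) (Suc (d j))"
        using finA by (intro phi_cong) auto
      finally show ?thesis .
    qed
    have V0: "V m r (p(a:=0)) A0 d0 = R"
      unfolding V_split[OF j(1), of r "p(a:=0)" A0 d0] unfolding A0_def d0_def rest_upd restq
      by (simp add: phi_empty)
    have mn: "\<forall>c\<in>A j. p a \<le> p c"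
    proof
      fix c assume c: "c \<in> A j"
      show "p a \<le> p c"
      proof (cases "c = a")
        case False
        hence "c \<in> set (filter (\<lambda>u. u \<in> T j) L)" using c rem[OF j(1)] by auto
        moreover have "sorted_wrt (\<lambda>a b. p a \<le> p b) (a # filter (\<lambda>u. u \<in> T j) L)"
        proof -
          have "sorted_wrt (\<lambda>a b. p a \<le> p b) (filter (\<lambda>u. u \<in> T j) (a # L))" using Cons.prems(6) j(1) by blast
          thus ?thesis using aT by simp
        qed
        ultimately show ?thesis by simp
      qed simp
    qed
    have "EE n p (\<lambda>x. of_bool (succ m r A d (chain (a # L)) x))
       = EE n p (\<lambda>x. if x a then of_bool (succ m r A1 d1 (chain L) x) else c * of_bool (succ m r A0 d0 (chain L) x))"
      unfolding Node A1_def d1_def A0_def d0_def c_def using succ_node_in[OF j oth] by simp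
    also have "\<dots> = p a * EE n (p(a:=1)) (\<lambda>x. of_bool (succ m r A1 d1 (chain L) x))
        + (1 - p a) * (c * EE n (p(a:=0)) (\<lambda>x. of_bool (succ m r A0 d0 (chain L) x)))"
      by (simp add: EE_split[OF an] EE_cmult)
    also have "\<dots> = (p a * phi r p (A j - {a}) (Suc (d j)) + (1 - p a) * c) * R"
      unfolding IH1 IH0 V1 V0 by (simp add: algebra_simps)
    also have "\<dots> = phi r p (A j) (d j) * R"
      using KE[OF finA j(2), of p r "d j"] pB j mn unfolding c_def by simp
    also have "\<dots> = V m r p A d" unfolding V_split[OF j(1)] R_def ..
    finally show ?thesis .
  next
    case False
    hence out: "\<forall>j<m. a \<notin> A j" by blast
    have fA: "\<forall>j<m. a \<notin> A j \<and> finite (A j)" using out finA' by blast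
    have sub': "\<forall>j<m. A j \<subseteq> T j \<inter> set L" using Cons.prems(2) out by fastforce
    have "EE n p (\<lambda>x. of_bool (succ m r A d (chain (a # L)) x))
      = EE n p (\<lambda>x. if x a then of_bool (succ m r A d (chain L) x) else of_bool (succ m r A d (chain L) x))"
      unfolding Node by (intro EE_cong) (auto simp: succ_node_out[OF out])
    also have "\<dots> = p a * EE n (p(a:=1)) (\<lambda>x. of_bool (succ m r A d (chain L) x))
        + (1 - p a) * EE n (p(a:=0)) (\<lambda>x. of_bool (succ m r A d (chain L) x))"
      by (rule EE_split[OF an])
    also have "\<dots> = p a * V m r (p(a:=1)) A d + (1 - p a) * V m r (p(a:=0)) A d"
      using Cons.IH[OF pr1 sub' Ln' aL(2) Cons.prems(5) srt1, of 1 d] Cons.IH[OF pr1 sub' Ln' aL(2) Cons.prems(5) srt1, of 0 d]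
      by (simp add: fun_upd_def)
    also have "\<dots> = V m r p A d" using V_p[OF fA] by (simp add: algebra_simps)
    finally show ?thesis .
  qed
qed


lemma tested_finite: "finite (tested t x)"
  by (induction t) auto

lemma card_tested: "real (card (tested t x)) \<le> tree_cost (\<lambda>_. 1) t x"
proof (induction t)
  case Leaf thus ?case by simp
next
  case (Node i l r)
  have "card (tested (Node i l r) x) \<le> Suc (card (tested (if x i then r else l) x))"
    by (simp add: card_insert_if tested_finite)
  thus ?case using Node by (cases "x i") auto
qed

lemma H_bound: "finite A \<Longrightarrow> H A t x \<le> (if \<exists>i\<in>A \<inter> tested t x. \<not> x i then card (A \<inter> tested t x) else card A)"
proof (induction t arbitrary: A)
  case Leaf thus ?case by simp
next
  case (Node i l r)
  let ?S = "tested (if x i then r else l) x"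
  have tN: "tested (Node i l r) x = insert i ?S" by simp
  have fS: "finite ?S" by (rule tested_finite)
  show ?case
  proof (cases "i \<in> A")
    case iA: True
    show ?thesis
    proof (cases "x i")
      case True
      have IH: "H (A - {i}) r x \<le> (if \<exists>i'\<in>(A - {i}) \<inter> tested r x. \<not> x i' then card ((A - {i}) \<inter> tested r x) else card (A - {i}))"
        using Node.IH(2)[of "A - {i}"] Node.prems by auto
      have ex: "(\<exists>i'\<in>A \<inter> tested (Node i l r) x. \<not> x i') = (\<exists>i'\<in>(A - {i}) \<inter> tested r x. \<not> x i')"
        using True by auto
      have e1: "A \<inter> tested (Node i l r) x = insert i ((A - {i}) \<inter> tested r x)" using True iA by auto
      have c1: "card (A \<inter> tested (Node i l r) x) = Suc (card ((A - {i}) \<inter> tested r x))"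
        unfolding e1 using Node.prems by (subst card_insert_disjoint) auto
      have c2: "card A = Suc (card (A - {i}))" using Node.prems iA by (intro card_Suc_Diff1[symmetric])
      have "H A (Node i l r) x = Suc (H (A - {i}) r x)" using True iA by simp
      thus ?thesis using IH unfolding ex c1 c2 by (cases "\<exists>i'\<in>(A - {i}) \<inter> tested r x. \<not> x i'") simp_all
    next
      case False
      have "i \<in> A \<inter> tested (Node i l r) x" using iA by simp
      hence "0 < card (A \<inter> tested (Node i l r) x)" using Node.prems by (auto simp: card_gt_0_iff)
      hence "1 \<le> card (A \<inter> tested (Node i l r) x)" by simp
      moreover have "\<exists>i'\<in>A \<inter> tested (Node i l r) x. \<not> x i'" using iA False by auto
      ultimately show ?thesis using iA False by simp
    qed
  next
    case iA: False
    have e: "A \<inter> tested (Node i l r) x = A \<inter> ?S" using iA by auto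
    have "H A (Node i l r) x = H A (if x i then r else l) x" using iA by simp
    moreover have "H A (if x i then r else l) x \<le> (if \<exists>i'\<in>A \<inter> ?S. \<not> x i' then card (A \<inter> ?S) else card A)"
    proof (cases "x i")
      case True thus ?thesis using Node.IH(2)[OF Node.prems] by (simp only: if_True)
    next
      case False thus ?thesis using Node.IH(1)[OF Node.prems] by (simp only: if_False)
    qed
    ultimately show ?thesis unfolding e by simp
  qed
qed

lemma H_le_tested:
  assumes Tsub: "\<forall>j<m. T j \<subseteq> {..<n}" and cardT: "\<forall>j<m. card (T j) = k"
  and fin: "\<forall>j<m. finite (T j)"
  and valid: "valid_tree (read_once_dnf m T) n t" and x: "x \<in> Inputs n" and j: "j < m"
  shows "H (T j) t x \<le> card (tested t x)"
proof -
  define S where "S = tested t x"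
  have fS: "finite S" unfolding S_def by (rule tested_finite)
  have det: "determined (read_once_dnf m T) n S x" using valid x unfolding valid_tree_def S_def by blast
  have hb: "H (T j) t x \<le> (if \<exists>i\<in>T j \<inter> S. \<not> x i then card (T j \<inter> S) else card (T j))"
    unfolding S_def using H_bound fin j by blast
  show ?thesis
  proof (cases "\<exists>i\<in>T j \<inter> S. \<not> x i")
    case True
    hence "H (T j) t x \<le> card (T j \<inter> S)" using hb by simp
    also have "\<dots> \<le> card S" using fS by (intro card_mono) auto
    finally show ?thesis unfolding S_def .
  next
    case False
    hence hk: "H (T j) t x \<le> k" using hb cardT j by simp
    define x1 where "x1 = (\<lambda>i. if i \<in> T j then True else x i)"
    have "T j \<subseteq> {..<n}" using Tsub j by blast
    hence x1I: "x1 \<in> Inputs n" using x unfolding x1_def Inputs_def by force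
    have x1S: "\<forall>i\<in>S. x1 i = x i" using False unfolding x1_def by auto
    have "read_once_dnf m T x1" unfolding read_once_dnf_def x1_def using j by auto
    hence fx: "read_once_dnf m T x" using det x1I x1S unfolding determined_def by blast
    define x2 where "x2 = (\<lambda>i. i \<in> S \<and> x i)"
    have x2I: "x2 \<in> Inputs n" using x unfolding x2_def Inputs_def by auto
    have x2S: "\<forall>i\<in>S. x2 i = x i" unfolding x2_def by auto
    have "read_once_dnf m T x2" using det x2I x2S fx unfolding determined_def by blast
    then obtain j' where j': "j' < m" "\<forall>i\<in>T j'. x2 i" unfolding read_once_dnf_def by blast
    hence "T j' \<subseteq> S" unfolding x2_def by auto
    hence "card (T j') \<le> card S" using fS by (rule card_mono[rotated])
    hence "k \<le> card S" using cardT j' by simp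
    thus ?thesis using hk unfolding S_def by simp
  qed
qed

lemma count_le:
  assumes Tsub: "\<forall>j<m. T j \<subseteq> {..<n}" and cardT: "\<forall>j<m. card (T j) = k"
  and fin: "\<forall>j<m. finite (T j)"
  and valid: "valid_tree (read_once_dnf m T) n t" and x: "x \<in> Inputs n"
  shows "(\<Sum>r<k. (of_bool (\<not> succ m r T (\<lambda>_. 0) t x) :: real)) \<le> tree_cost (\<lambda>_. 1) t x"
proof -
  have "{..<k} \<inter> {r. \<not> succ m r T (\<lambda>_. 0) t x} \<subseteq> {..<card (tested t x)}"
  proof
    fix r assume "r \<in> {..<k} \<inter> {r. \<not> succ m r T (\<lambda>_. 0) t x}"
    then obtain j where j: "j < m" "\<not> H (T j) t x \<le> r" unfolding succ_def by auto
    thus "r \<in> {..<card (tested t x)}" using H_le_tested[OF Tsub cardT fin valid x j(1)] by simp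
  qed
  hence "card ({..<k} \<inter> {r. \<not> succ m r T (\<lambda>_. 0) t x}) \<le> card (tested t x)"
    by (metis card_lessThan card_mono finite_lessThan)
  hence "(\<Sum>r<k. (of_bool (\<not> succ m r T (\<lambda>_. 0) t x) :: real)) \<le> real (card (tested t x))"
    by simp
  also have "\<dots> \<le> tree_cost (\<lambda>_. 1) t x" by (rule card_tested)
  finally show ?thesis .
qed


definition rr :: "nat \<Rightarrow> nat \<Rightarrow> (nat \<Rightarrow> nat list) \<Rightarrow> nat list" where
  "rr m k L = concat (map (\<lambda>r. map (\<lambda>j. L j ! r) [0..<m]) [0..<k])"

lemma rr_length: "length (rr m k L) = k * m"
  unfolding rr_def by (simp add: length_concat comp_def sum_list_triv)

lemma rr_take: assumes "r \<le> k" shows "take (m * r) (rr m k L) = rr m r L"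
proof -
  have "[0..<k] = [0..<r] @ [r..<k]" using assms upt_add_eq_append[of 0 r "k - r"] by simp
  hence "rr m k L = rr m r L @ concat (map (\<lambda>r. map (\<lambda>j. L j ! r) [0..<m]) [r..<k])"
    unfolding rr_def by simp
  moreover have "length (rr m r L) = m * r" by (simp add: rr_length)
  ultimately show ?thesis by simp
qed

lemma rr_set: "set (rr m r L) = {L j ! r' | j r'. j < m \<and> r' < r}"
  unfolding rr_def by fastforce

lemma filter_upt_single: assumes "j < m" "\<forall>j'<m. Q j' = (j' = j)"
  shows "filter Q [0..<m] = [j]"
proof -
  have "[0..<m] = [0..<j] @ [j..<m]" using assms upt_add_eq_append[of 0 j "m - j"] by simp
  also have "[j..<m] = j # [Suc j..<m]" using assms by (simp add: upt_rec)
  finally have e: "[0..<m] = [0..<j] @ j # [Suc j..<m]" .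
  have "filter Q [0..<j] = []" using assms by (auto simp: filter_empty_conv)
  moreover have "filter Q [Suc j..<m] = []" using assms by (auto simp: filter_empty_conv)
  ultimately show ?thesis unfolding e using assms by simp
qed

lemma rr_filter:
  assumes inT: "\<forall>j<m. \<forall>r<k. L j ! r \<in> T j" and disjT: "\<forall>j<m. \<forall>j'<m. j \<noteq> j' \<longrightarrow> T j \<inter> T j' = {}"
  and len: "length (L j) = k" and j: "j < m"
  shows "filter (\<lambda>a. a \<in> T j) (rr m k L) = L j"
proof -
  have "\<And>r. r \<in> set [0..<k] \<Longrightarrow> filter (\<lambda>a. a \<in> T j) (map (\<lambda>j'. L j' ! r) [0..<m]) = [L j ! r]"
  proof -
    fix r assume "r \<in> set [0..<k]"
    hence r: "r < k" by simp
    have "\<forall>j'<m. (L j' ! r \<in> T j) = (j' = j)"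
    proof (intro allI impI)
      fix j' assume j': "j' < m"
      show "(L j' ! r \<in> T j) = (j' = j)"
      proof
        assume "L j' ! r \<in> T j"
        moreover have "L j' ! r \<in> T j'" using inT j' r by blast
        ultimately show "j' = j" using disjT j j' by blast
      next
        assume "j' = j" thus "L j' ! r \<in> T j" using inT j r by blast
      qed
    qed
    hence "filter (\<lambda>j'. L j' ! r \<in> T j) [0..<m] = [j]" using j by (intro filter_upt_single) auto
    thus "filter (\<lambda>a. a \<in> T j) (map (\<lambda>j'. L j' ! r) [0..<m]) = [L j ! r]"
      by (simp add: filter_map comp_def)
  qed
  hence "filter (\<lambda>a. a \<in> T j) (rr m k L) = concat (map (\<lambda>r. [L j ! r]) [0..<k])"
    unfolding rr_def filter_concat map_map comp_def by (intro arg_cong[where f=concat] map_cong) auto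
  also have "\<dots> = map (\<lambda>r. L j ! r) [0..<k]" by simp
  also have "\<dots> = L j" using len map_nth by metis
  finally show ?thesis .
qed

lemma tested_chain: "tested (chain L) x = set L"
  by (induction L) auto

lemma chain_zero: "distinct L \<Longrightarrow> finite A \<Longrightarrow> H A (chain L) x \<le> r \<Longrightarrow> r < card A \<Longrightarrow>
  \<exists>i\<in>set (take r (filter (\<lambda>a. a \<in> A) L)). \<not> x i"
proof (induction L arbitrary: A r)
  case Nil thus ?case by simp
next
  case (Cons a L)
  have aL: "a \<notin> set L" "distinct L" using Cons.prems by auto
  show ?case
  proof (cases "a \<in> A")
    case aA: True
    show ?thesis
    proof (cases "x a")
      case True
      have H: "Suc (H (A - {a}) (chain L) x) \<le> r" using Cons.prems(3) aA True by simp
      then obtain r' where r': "r = Suc r'" by (cases r) auto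
      have "H (A - {a}) (chain L) x \<le> r'" using H r' by simp
      moreover have "r' < card (A - {a})" using Cons.prems(2,4) aA r' by simp
      ultimately obtain i where i: "i \<in> set (take r' (filter (\<lambda>u. u \<in> A - {a}) L))" "\<not> x i"
        using Cons.IH[OF aL(2)] Cons.prems(2) by blast
      have "filter (\<lambda>u. u \<in> A - {a}) L = filter (\<lambda>u. u \<in> A) L"
        using aL(1) by (intro filter_cong) auto
      hence "i \<in> set (take r (filter (\<lambda>u. u \<in> A) (a # L)))" using i aA r' by auto
      thus ?thesis using i by blast
    next
      case False
      have "1 \<le> r" using Cons.prems(3) aA False by simp
      hence "a \<in> set (take r (filter (\<lambda>u. u \<in> A) (a # L)))" using aA by (cases r) auto
      thus ?thesis using False by blast
    qed
  next
    case False
    have "H A (chain L) x \<le> r" using Cons.prems(3) False by simp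
    then obtain i where "i \<in> set (take r (filter (\<lambda>u. u \<in> A) L))" "\<not> x i"
      using Cons.IH[OF aL(2) Cons.prems(2) _ Cons.prems(4)] by blast
    thus ?thesis using False by auto
  qed
qed


lemma determined_all: "x \<in> Inputs n \<Longrightarrow> {..<n} \<subseteq> S \<Longrightarrow> determined f n S x"
proof -
  assume x: "x \<in> Inputs n" and S: "{..<n} \<subseteq> S"
  { fix x' assume x': "x' \<in> Inputs n" "\<forall>i\<in>S. x' i = x i"
    have "x' = x"
    proof
      fix i show "x' i = x i"
        using x x' S by (cases "i < n") (auto simp: Inputs_def)
    qed }
  thus ?thesis unfolding determined_def by auto
qed

lemma of_bool_not: "(of_bool (\<not> P) :: real) = 1 - of_bool P" by simp

theorem lemma2:
  fixes n m :: nat and T :: "nat \<Rightarrow> nat set" and p :: "nat \<Rightarrow> real"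
  assumes m_pos: "m > 0"
    and disj: "\<And>j j'. j < m \<Longrightarrow> j' < m \<Longrightarrow> j \<noteq> j' \<Longrightarrow> T j \<inter> T j' = {}"
    and cover: "(\<Union>j<m. T j) = {..<n}"
    and size: "\<And>j. j < m \<Longrightarrow> card (T j) * m = n"
    and p: "\<And>i. i < n \<Longrightarrow> 0 < p i \<and> p i < 1"
  shows "\<exists>\<sigma>. is_perm n \<sigma> \<and>
           cost_nonadaptive (read_once_dnf m T) n (\<lambda>_. 1) p \<sigma>
             \<le> real m * OPT_A (read_once_dnf m T) n (\<lambda>_. 1) p"
proof -
  define k where "k = card (T 0)"
  have Tsub: "\<forall>j<m. T j \<subseteq> {..<n}" using cover by blast
  have finT: "\<forall>j<m. finite (T j)" using Tsub finite_subset by blast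
  have cardT: "\<forall>j<m. card (T j) = k"
    using size m_pos unfolding k_def by (metis mult_right_cancel not_gr0)
  have nkm: "n = k * m" using size[OF m_pos] unfolding k_def by simp
  have disjT: "\<forall>j<m. \<forall>j'<m. j \<noteq> j' \<longrightarrow> T j \<inter> T j' = {}" using disj by blast
  define L where "L j = sort_key p (sorted_list_of_set (T j))" for j
  have Lset: "set (L j) = T j" if "j < m" for j using finT that unfolding L_def by simp
  have Llen: "length (L j) = k" if "j < m" for j using finT cardT that unfolding L_def by simp
  have Lsort: "sorted_wrt (\<lambda>a b. p a \<le> p b) (L j)" for j
    using sorted_sort_key[of p] unfolding L_def sorted_map by blast
  have inT: "\<forall>j<m. \<forall>r<k. L j ! r \<in> T j" using Lset Llen by (metis nth_mem)
  define \<sigma> where "\<sigma> = rr m k L"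
  have filt: "filter (\<lambda>a. a \<in> T j) \<sigma> = L j" if "j < m" for j
    unfolding \<sigma>_def using rr_filter[OF inT disjT Llen[OF that] that] .
  have len\<sigma>: "length \<sigma> = n" unfolding \<sigma>_def rr_length nkm ..
  have set\<sigma>: "set \<sigma> = {..<n}"
  proof
    show "set \<sigma> \<subseteq> {..<n}" unfolding \<sigma>_def rr_set using inT Tsub by blast
    show "{..<n} \<subseteq> set \<sigma>"
    proof
      fix i assume "i \<in> {..<n}"
      then obtain j where j: "j < m" "i \<in> T j" using cover by blast
      hence "i \<in> set (L j)" using Lset by simp
      then obtain r where "r < length (L j)" "L j ! r = i" by (metis in_set_conv_nth)
      thus "i \<in> set \<sigma>" unfolding \<sigma>_def rr_set using j Llen by fastforce
    qed
  qed
  have dist\<sigma>: "distinct \<sigma>" by (rule card_distinct) (simp add: set\<sigma> len\<sigma>)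
  have perm: "is_perm n \<sigma>" unfolding is_perm_def using dist\<sigma> set\<sigma> by simp
  have pr: "\<forall>l<n. 0 \<le> p l \<and> p l \<le> 1" using p by (auto intro: less_imp_le)
  have finsub: "\<forall>j<m. finite (T j) \<and> T j \<subseteq> {..<n}" using finT Tsub by blast
  let ?succ = "\<lambda>r t x. succ m r T (\<lambda>_. 0) t x"
  have A: "EE n p (\<lambda>x. of_bool (?succ r t x)) \<le> V m r p T (\<lambda>_. 0)" for r t
    by (rule succ_le[OF pr finsub disjT])
  have B: "EE n p (\<lambda>x. of_bool (?succ r (chain \<sigma>) x)) = V m r p T (\<lambda>_. 0)" for r
  proof (rule succ_eq[OF pr _ _ dist\<sigma> disjT])
    show "\<forall>j<m. T j \<subseteq> T j \<inter> set \<sigma>" using Tsub set\<sigma> by blast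
    show "set \<sigma> \<subseteq> {..<n}" using set\<sigma> by simp
    show "\<forall>j<m. sorted_wrt (\<lambda>a b. p a \<le> p b) (filter (\<lambda>a. a \<in> T j) \<sigma>)" using filt Lsort by simp
  qed
  have C: "sum_list (map (\<lambda>_. 1) (take (stop_index (read_once_dnf m T) n \<sigma> x) \<sigma>))
      \<le> real m * (\<Sum>r<k. of_bool (\<not> ?succ r (chain \<sigma>) x))" if x: "x \<in> Inputs n" for x
  proof -
    define P where "P r = (r = k \<or> ?succ r (chain \<sigma>) x)" for r
    define r0 where "r0 = (LEAST r. P r)"
    have r0k: "r0 \<le> k" unfolding r0_def by (rule Least_le) (simp add: P_def)
    have Pr0: "P r0" unfolding r0_def by (rule LeastI[of _ k]) (simp add: P_def)
    have det: "determined (read_once_dnf m T) n (set (take (m * r0) \<sigma>)) x"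
    proof (cases "r0 = k")
      case True
      have "take (m * r0) \<sigma> = \<sigma>" using True len\<sigma> nkm by (simp add: mult.commute)
      thus ?thesis using determined_all[OF x] set\<sigma> by simp
    next
      case False
      hence sc: "?succ r0 (chain \<sigma>) x" and r0lt: "r0 < k" using Pr0 r0k unfolding P_def by auto
      have zero: "\<exists>i\<in>T j \<inter> set (take (m * r0) \<sigma>). \<not> x i" if j: "j < m" for j
      proof -
        have "H (T j) (chain \<sigma>) x \<le> r0" using sc j unfolding succ_def by auto
        then obtain i where i: "i \<in> set (take r0 (filter (\<lambda>a. a \<in> T j) \<sigma>))" "\<not> x i"
          using chain_zero[OF dist\<sigma>, of "T j" x r0] finT cardT j r0lt by auto
        hence "i \<in> set (take r0 (L j))" using filt[OF j] by simp
        then obtain r' where r': "r' < r0" "i = L j ! r'"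
          using Llen[OF j] r0lt by (auto simp: in_set_conv_nth)
        have "i \<in> set (take (m * r0) \<sigma>)" unfolding \<sigma>_def rr_take[OF r0k] rr_set using r' j by blast
        moreover have "i \<in> T j" using inT j r' r0lt by auto
        ultimately show ?thesis using i by blast
      qed
      show ?thesis unfolding determined_def
      proof (intro ballI impI)
        fix x' assume x': "x' \<in> Inputs n" "\<forall>i\<in>set (take (m * r0) \<sigma>). x' i = x i"
        have "\<not> read_once_dnf m T x" using zero unfolding read_once_dnf_def by blast
        moreover have "\<not> read_once_dnf m T x'" using zero x'(2) unfolding read_once_dnf_def by fastforce
        ultimately show "read_once_dnf m T x' = read_once_dnf m T x" by simp
      qed
    qed
    have si: "stop_index (read_once_dnf m T) n \<sigma> x \<le> m * r0"
      unfolding stop_index_def by (rule Least_le) (rule det)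
    have "sum_list (map (\<lambda>_. 1::real) (take (stop_index (read_once_dnf m T) n \<sigma> x) \<sigma>))
        = real (length (take (stop_index (read_once_dnf m T) n \<sigma> x) \<sigma>))"
      by (simp add: sum_list_triv)
    also have "\<dots> \<le> real (m * r0)"
    proof -
      have "length (take (stop_index (read_once_dnf m T) n \<sigma> x) \<sigma>) \<le> m * r0" using si by simp
      thus ?thesis by (simp only: of_nat_le_iff)
    qed
    also have "\<dots> \<le> real m * (\<Sum>r<k. of_bool (\<not> ?succ r (chain \<sigma>) x))"
    proof -
      have "{..<r0} \<subseteq> {..<k} \<inter> {r. \<not> ?succ r (chain \<sigma>) x}"
      proof
        fix r assume "r \<in> {..<r0}"
        hence "\<not> P r" unfolding r0_def using not_less_Least by auto
        thus "r \<in> {..<k} \<inter> {r. \<not> ?succ r (chain \<sigma>) x}" using \<open>r \<in> {..<r0}\<close> r0k unfolding P_def by auto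
      qed
      hence "r0 \<le> card ({..<k} \<inter> {r. \<not> ?succ r (chain \<sigma>) x})"
        by (metis card_lessThan card_mono finite_Int finite_lessThan)
      hence "real r0 \<le> real (card ({..<k} \<inter> {r. \<not> ?succ r (chain \<sigma>) x}))" by (simp only: of_nat_le_iff)
      hence "real m * real r0 \<le> real m * real (card ({..<k} \<inter> {r. \<not> ?succ r (chain \<sigma>) x}))"
        by (intro mult_left_mono) auto
      thus ?thesis by simp
    qed
    finally show ?thesis .
  qed
  have NA: "cost_nonadaptive (read_once_dnf m T) n (\<lambda>_. 1) p \<sigma> \<le> real m * (\<Sum>r<k. 1 - V m r p T (\<lambda>_. 0))"
  proof -
    have "cost_nonadaptive (read_once_dnf m T) n (\<lambda>_. 1) p \<sigma>
        = EE n p (\<lambda>x. sum_list (map (\<lambda>_. 1) (take (stop_index (read_once_dnf m T) n \<sigma> x) \<sigma>)))"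
      unfolding cost_nonadaptive_def EE_def ..
    also have "\<dots> \<le> EE n p (\<lambda>x. real m * (\<Sum>r<k. of_bool (\<not> ?succ r (chain \<sigma>) x)))"
      by (rule EE_mono[OF pr C])
    also have "\<dots> = real m * (\<Sum>r<k. 1 - V m r p T (\<lambda>_. 0))"
      unfolding EE_cmult EE_sum of_bool_not EE_diff EE_const B ..
    finally show ?thesis .
  qed
  have AD: "(\<Sum>r<k. 1 - V m r p T (\<lambda>_. 0)) \<le> cost_adaptive (read_once_dnf m T) n (\<lambda>_. 1) p t"
    if v: "valid_tree (read_once_dnf m T) n t" for t
  proof -
    have "(\<Sum>r<k. 1 - V m r p T (\<lambda>_. 0)) \<le> (\<Sum>r<k. 1 - EE n p (\<lambda>x. of_bool (?succ r t x)))"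
      using A by (intro sum_mono) (simp add: algebra_simps)
    also have "\<dots> = EE n p (\<lambda>x. \<Sum>r<k. of_bool (\<not> ?succ r t x))"
      unfolding EE_sum of_bool_not EE_diff EE_const ..
    also have "\<dots> \<le> EE n p (\<lambda>x. tree_cost (\<lambda>_. 1) t x)"
      by (rule EE_mono[OF pr count_le[OF Tsub cardT finT v]])
    also have "\<dots> = cost_adaptive (read_once_dnf m T) n (\<lambda>_. 1) p t"
      unfolding cost_adaptive_def EE_def ..
    finally show ?thesis .
  qed
  have valid\<sigma>: "valid_tree (read_once_dnf m T) n (chain \<sigma>)"
    unfolding valid_tree_def tested_chain set\<sigma> using determined_all by blast
  have "(\<Sum>r<k. 1 - V m r p T (\<lambda>_. 0)) \<le> OPT_A (read_once_dnf m T) n (\<lambda>_. 1) p"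
    unfolding OPT_A_def
  proof (rule cInf_greatest)
    show "{cost_adaptive (read_once_dnf m T) n (\<lambda>_. 1) p t |t. valid_tree (read_once_dnf m T) n t} \<noteq> {}"
      using valid\<sigma> by blast
  qed (use AD in blast)
  hence "real m * (\<Sum>r<k. 1 - V m r p T (\<lambda>_. 0)) \<le> real m * OPT_A (read_once_dnf m T) n (\<lambda>_. 1) p"
    by (intro mult_left_mono) auto
  with NA perm show ?thesis by (intro exI[of _ \<sigma>]) auto
qed

end
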